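(* Let $\Pi$ be a homogeneous Poisson point process in $\mathbb{R}^2$ of unit intensity. Let $A=(-1/2,0)$, $B=(1/2,0)$, and let $C$ be the point of $\Pi$ nearest to $(0,0)$. Then the probability that triangle $ABC$ is acute equals \[ e^{-\pi/4}-\operatorname{erfc}\!\left(\sqrt{\pi}/2\right)=0.2458467223\ldots \]
   Context: $\operatorname{erfc}$ is the complementary error function. *)

theory Defs
  imports "HOL-Probability.Probability"
begin

definition erfc :: "real \<Rightarrow> real" where
  "erfc x = 2 / sqrt pi * (LBINT t:{x..}. exp (- (t ^ 2)))"

definition homogeneous_PPP :: "'w measure \<Rightarrow> ('w \<Rightarrow> (real \<times> real) set) \<Rightarrow> bool" where
  "homogeneous_PPP M P \<longleftrightarrow>
     prob_space M \<and>
     (\<forall>\<omega>\<in>space M. \<forall>B. bounded B \<longrightarrow> finite (P \<omega> \<inter> B)) \<and>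
     (\<forall>B\<in>sets lborel. bounded B \<longrightarrow>
        (\<lambda>\<omega>. card (P \<omega> \<inter> B)) \<in> measurable M (count_space UNIV) \<and>
        (\<forall>k::nat. measure M {\<omega>\<in>space M. card (P \<omega> \<inter> B) = k}
                   = measure lborel B ^ k / fact k * exp (- measure lborel B))) \<and>
     (\<forall>(Bs :: nat \<Rightarrow> (real \<times> real) set) n.
        (\<forall>i<n. Bs i \<in> sets lborel \<and> bounded (Bs i)) \<and> disjoint_family_on Bs {..<n} \<longrightarrow>
        prob_space.indep_vars M (\<lambda>_. count_space UNIV) (\<lambda>i \<omega>. card (P \<omega> \<inter> Bs i)) {..<n})"

definition acute_triangle :: "real \<times> real \<Rightarrow> real \<times> real \<Rightarrow> real \<times> real \<Rightarrow> bool" where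
  "acute_triangle A B C \<longleftrightarrow>
     (B - A) \<bullet> (C - A) > 0 \<and> (A - B) \<bullet> (C - B) > 0 \<and> (A - C) \<bullet> (B - C) > 0"

end

theory Submission
  imports Defs
begin
locale ppp =
  fixes M :: "'w measure" and P :: "'w \<Rightarrow> (real \<times> real) set"
  assumes ppp: "homogeneous_PPP M P"
begin

lemma ps: "prob_space M" using ppp by (simp add: homogeneous_PPP_def)

lemma fin: "\<omega> \<in> space M \<Longrightarrow> bounded B \<Longrightarrow> finite (P \<omega> \<inter> B)"
  using ppp by (simp add: homogeneous_PPP_def)

lemma cnt_meas: "B \<in> sets lborel \<Longrightarrow> bounded B \<Longrightarrow> (\<lambda>\<omega>. card (P \<omega> \<inter> B)) \<in> measurable M (count_space UNIV)"
  using ppp by (simp add: homogeneous_PPP_def)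

lemma cnt_sets: "B \<in> sets lborel \<Longrightarrow> bounded B \<Longrightarrow> {\<omega>\<in>space M. Q (card (P \<omega> \<inter> B))} \<in> sets M"
proof -
  assume a: "B \<in> sets lborel" "bounded B"
  have "{\<omega>\<in>space M. Q (card (P \<omega> \<inter> B))} = (\<lambda>\<omega>. card (P \<omega> \<inter> B)) -` {k. Q k} \<inter> space M" by auto
  also have "\<dots> \<in> sets M" using cnt_meas[OF a] by (rule measurable_sets) auto
  finally show ?thesis .
qed

lemma cnt_prob: "B \<in> sets lborel \<Longrightarrow> bounded B \<Longrightarrow>
   measure M {\<omega>\<in>space M. card (P \<omega> \<inter> B) = k} = measure lborel B ^ k / fact k * exp (- measure lborel B)"
  using ppp by (simp add: homogeneous_PPP_def)

lemma cnt0: "B \<in> sets lborel \<Longrightarrow> bounded B \<Longrightarrow>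
   measure M {\<omega>\<in>space M. card (P \<omega> \<inter> B) = 0} = exp (- measure lborel B)"
  using cnt_prob[of B 0] by simp

lemma cnt1: "B \<in> sets lborel \<Longrightarrow> bounded B \<Longrightarrow>
   measure M {\<omega>\<in>space M. card (P \<omega> \<inter> B) = 1} = measure lborel B * exp (- measure lborel B)"
proof -
  assume a: "B \<in> sets lborel" "bounded B"
  have "measure lborel B ^ 1 / fact 1 * exp (- measure lborel B) = measure lborel B * exp (- measure lborel B)" by simp
  from cnt_prob[OF a, of 1] show ?thesis by (simp only: power_one_right fact_1 div_by_1)
qed

lemma cnt_ge1: "B \<in> sets lborel \<Longrightarrow> bounded B \<Longrightarrow>
   measure M {\<omega>\<in>space M. 1 \<le> card (P \<omega> \<inter> B)} = 1 - exp (- measure lborel B)"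
proof -
  assume a: "B \<in> sets lborel" "bounded B"
  interpret prob_space M by (rule ps)
  have "{\<omega>\<in>space M. 1 \<le> card (P \<omega> \<inter> B)} = space M - {\<omega>\<in>space M. card (P \<omega> \<inter> B) = 0}" by auto
  then show ?thesis using prob_compl[OF cnt_sets[OF a, of "\<lambda>k. k = 0"]] cnt0[OF a] by simp
qed

lemma cnt_ge2: "B \<in> sets lborel \<Longrightarrow> bounded B \<Longrightarrow>
   measure M {\<omega>\<in>space M. 2 \<le> card (P \<omega> \<inter> B)} \<le> (measure lborel B)^2"
proof -
  assume a: "B \<in> sets lborel" "bounded B"
  interpret prob_space M by (rule ps)
  let ?a = "measure lborel B"
  have e: "{\<omega>\<in>space M. 2 \<le> card (P \<omega> \<inter> B)} = space M - ({\<omega>\<in>space M. card (P \<omega> \<inter> B) = 0} \<union> {\<omega>\<in>space M. card (P \<omega> \<inter> B) = 1})" by auto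
  have d: "measure M ({\<omega>\<in>space M. card (P \<omega> \<inter> B) = 0} \<union> {\<omega>\<in>space M. card (P \<omega> \<inter> B) = 1})
     = exp (- ?a) + ?a * exp (- ?a)"
    by (subst finite_measure_Union) (auto simp: cnt0[OF a] cnt1[OF a, simplified] intro: cnt_sets[OF a])
  have "measure M {\<omega>\<in>space M. 2 \<le> card (P \<omega> \<inter> B)} = 1 - (exp (- ?a) + ?a * exp (- ?a))"
    unfolding e by (subst prob_compl) (auto simp del: One_nat_def simp: d intro!: sets.Un cnt_sets[OF a])
  also have "\<dots> \<le> ?a^2"
  proof -
    have "1 - ?a \<le> exp (- ?a)" using exp_ge_add_one_self[of "- ?a"] by simp
    hence "(1 + ?a) * (1 - ?a) \<le> (1 + ?a) * exp (- ?a)" by (intro mult_left_mono) auto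
    thus ?thesis by (simp add: algebra_simps power2_eq_square)
  qed
  finally show ?thesis .
qed

lemma indep2:
  assumes B1: "B1 \<in> sets lborel" "bounded B1" and B2: "B2 \<in> sets lborel" "bounded B2"
    and dj: "B1 \<inter> B2 = {}"
  shows "measure M {\<omega>\<in>space M. card (P \<omega> \<inter> B1) \<in> K1 \<and> card (P \<omega> \<inter> B2) \<in> K2}
    = measure M {\<omega>\<in>space M. card (P \<omega> \<inter> B1) \<in> K1} * measure M {\<omega>\<in>space M. card (P \<omega> \<inter> B2) \<in> K2}"
proof -
  interpret prob_space M by (rule ps)
  define Bs where "Bs = (\<lambda>i::nat. if i = 0 then B1 else B2)"
  define A where "A = (\<lambda>i::nat. if i = 0 then K1 else K2)"
  have "disjoint_family_on Bs {..<2}" using dj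
    by (auto simp: disjoint_family_on_def Bs_def lessThan_def less_2_cases_iff)
  moreover have "\<forall>i<2. Bs i \<in> sets lborel \<and> bounded (Bs i)" using B1 B2 by (auto simp: Bs_def)
  ultimately have ind: "indep_vars (\<lambda>_. count_space UNIV) (\<lambda>i \<omega>. card (P \<omega> \<inter> Bs i)) {..<2::nat}"
    using ppp by (simp add: homogeneous_PPP_def)
  have "prob (\<Inter>i\<in>{0,1}. (\<lambda>\<omega>. card (P \<omega> \<inter> Bs i)) -` A i \<inter> space M)
     = (\<Prod>i\<in>{0,1}. prob ((\<lambda>\<omega>. card (P \<omega> \<inter> Bs i)) -` A i \<inter> space M))"
    by (rule indep_varsD[OF ind]) auto
  moreover have "(\<Inter>i\<in>{0,1}. (\<lambda>\<omega>. card (P \<omega> \<inter> Bs i)) -` A i \<inter> space M)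
     = {\<omega>\<in>space M. card (P \<omega> \<inter> B1) \<in> K1 \<and> card (P \<omega> \<inter> B2) \<in> K2}"
    by (auto simp: Bs_def A_def)
  moreover have "(\<lambda>\<omega>. card (P \<omega> \<inter> Bs 0)) -` A 0 \<inter> space M = {\<omega>\<in>space M. card (P \<omega> \<inter> B1) \<in> K1}"
    "(\<lambda>\<omega>. card (P \<omega> \<inter> Bs 1)) -` A 1 \<inter> space M = {\<omega>\<in>space M. card (P \<omega> \<inter> B2) \<in> K2}"
    by (auto simp: Bs_def A_def)
  ultimately show ?thesis by simp
qed

end

lemma disk_area: "r \<ge> 0 \<Longrightarrow> measure lborel (ball (c::real\<times>real) r) = pi * r^2"
  by (simp add: content_ball unit_ball_vol_2 power2_eq_square)

lemma cdisk_area: "r \<ge> 0 \<Longrightarrow> measure lborel (cball (c::real\<times>real) r) = pi * r^2"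
  by (simp add: content_cball unit_ball_vol_2 power2_eq_square)

context ppp begin

definition NE :: "(real \<times> real) set \<Rightarrow> 'w set" where
  "NE S = {\<omega>\<in>space M. \<exists>C\<in>P \<omega>. (\<forall>p\<in>P \<omega>. p \<noteq> C \<longrightarrow> norm C < norm p) \<and> C \<in> S}"

lemma NE_eq: "NE S = (\<Union>b\<in>\<rat>. {\<omega>\<in>space M. card (P \<omega> \<inter> cball 0 b) = 1 \<and> card (P \<omega> \<inter> (cball 0 b \<inter> S)) = 1})"
proof (intro equalityI subsetI)
  fix \<omega> assume "\<omega> \<in> NE S"
  then obtain C where om: "\<omega> \<in> space M" and C: "C \<in> P \<omega>" "\<forall>p\<in>P \<omega>. p \<noteq> C \<longrightarrow> norm C < norm p" "C \<in> S"
    unfolding NE_def by blast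
  define F where "F = P \<omega> \<inter> cball 0 (norm C + 1) - {C}"
  have finF: "finite F" unfolding F_def using fin[OF om, of "cball 0 (norm C + 1)"] by auto
  define b' where "b' = (if F = {} then norm C + 1 else min (norm C + 1) (Min (norm ` F)))"
  have "norm C < b'"
  proof (cases "F = {}")
    case False
    have "\<forall>x\<in>norm ` F. norm C < x" using C(2) by (auto simp: F_def)
    then have "norm C < Min (norm ` F)" using False finF by simp
    then show ?thesis using False by (simp add: b'_def)
  qed (simp add: b'_def)
  then obtain b where b: "b \<in> \<rat>" "norm C < b" "b < b'" using Rats_dense_in_real by blast
  have e1: "P \<omega> \<inter> cball 0 b = {C}"
  proof (intro equalityI subsetI)
    fix p assume p: "p \<in> P \<omega> \<inter> cball 0 b"
    show "p \<in> {C}"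
    proof (rule ccontr)
      assume "p \<notin> {C}"
      have "b' \<le> norm C + 1" by (simp add: b'_def)
      moreover have "norm p \<le> b" using p by simp
      ultimately have "norm p \<le> norm C + 1" using b by linarith
      hence pF: "p \<in> F" using p \<open>p \<notin> {C}\<close> by (simp add: F_def)
      hence "F \<noteq> {}" by auto
      have "Min (norm ` F) \<le> norm p" using pF finF by simp
      hence "b' \<le> norm p" using \<open>F \<noteq> {}\<close> by (simp add: b'_def)
      thus False using p b by auto
    qed
  qed (use C b in auto)
  hence e2: "P \<omega> \<inter> (cball 0 b \<inter> S) = {C}" using C by auto
  show "\<omega> \<in> (\<Union>b\<in>\<rat>. {\<omega>\<in>space M. card (P \<omega> \<inter> cball 0 b) = 1 \<and> card (P \<omega> \<inter> (cball 0 b \<inter> S)) = 1})"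
  proof (rule UN_I[of b])
    show "\<omega> \<in> {\<omega>\<in>space M. card (P \<omega> \<inter> cball 0 b) = 1 \<and> card (P \<omega> \<inter> (cball 0 b \<inter> S)) = 1}"
      using om by (simp add: e1 e2)
  qed (rule b(1))
next
  fix \<omega> assume "\<omega> \<in> (\<Union>b\<in>\<rat>. {\<omega>\<in>space M. card (P \<omega> \<inter> cball 0 b) = 1 \<and> card (P \<omega> \<inter> (cball 0 b \<inter> S)) = 1})"
  then obtain b where om: "\<omega> \<in> space M" and c1: "card (P \<omega> \<inter> cball 0 b) = 1" and c2: "card (P \<omega> \<inter> (cball 0 b \<inter> S)) = 1"
    by auto
  from c2 obtain C where C: "P \<omega> \<inter> (cball 0 b \<inter> S) = {C}" by (auto simp: card_1_singleton_iff)
  from c1 obtain D where D: "P \<omega> \<inter> cball 0 b = {D}" by (auto simp: card_1_singleton_iff)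
  have "C = D" using C D by blast
  have "\<forall>p\<in>P \<omega>. p \<noteq> C \<longrightarrow> norm C < norm p"
  proof (intro ballI impI)
    fix p assume "p \<in> P \<omega>" "p \<noteq> C"
    hence "p \<notin> cball 0 b" using D \<open>C = D\<close> by blast
    hence "norm p > b" by simp
    moreover have "norm C \<le> b" using C by auto
    ultimately show "norm C < norm p" by simp
  qed
  then show "\<omega> \<in> NE S" using C om unfolding NE_def by blast
qed

lemma NE_sets: assumes S: "S \<in> sets lborel" shows "NE S \<in> sets M"
  unfolding NE_eq
proof (intro sets.countable_UN'' countable_rat)
  fix b :: real
  have "{\<omega>\<in>space M. card (P \<omega> \<inter> cball 0 b) = 1 \<and> card (P \<omega> \<inter> (cball 0 b \<inter> S)) = 1}
    = {\<omega>\<in>space M. card (P \<omega> \<inter> cball 0 b) = 1} \<inter> {\<omega>\<in>space M. card (P \<omega> \<inter> (cball 0 b \<inter> S)) = 1}" by auto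
  also have "\<dots> \<in> sets M"
    by (intro sets.Int cnt_sets) (use S in \<open>auto intro: bounded_subset[of "cball 0 b"]\<close>)
  finally show "{\<omega>\<in>space M. card (P \<omega> \<inter> cball 0 b) = 1 \<and> card (P \<omega> \<inter> (cball 0 b \<inter> S)) = 1} \<in> sets M" .
qed

end

definition gd :: "real \<times> real \<Rightarrow> real" where "gd c = exp (- pi * (norm c)^2)"

definition nu :: "(real \<times> real) measure" where "nu = density lborel (\<lambda>c. ennreal (gd c))"

lemma gd_meas[measurable]: "gd \<in> borel_measurable borel"
  unfolding gd_def by measurable

lemma sets_nu[simp]: "sets nu = sets lborel" by (simp add: nu_def)

lemma emeasure_nu: "S \<in> sets lborel \<Longrightarrow> emeasure nu S = (\<integral>\<^sup>+ x. ennreal (gd x) * indicator S x \<partial>lborel)"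
  unfolding nu_def by (rule emeasure_density) auto

lemma nu_bounds:
  assumes S: "S \<in> sets lborel" "emeasure lborel S < \<infinity>"
    and ab: "\<And>c. c \<in> S \<Longrightarrow> a \<le> gd c \<and> gd c \<le> b" and a: "0 \<le> a" and b0: "0 \<le> b"
  shows "a * measure lborel S \<le> measure nu S" "measure nu S \<le> b * measure lborel S"
    "emeasure nu S = ennreal (measure nu S)"
proof -
  have eS: "emeasure lborel S = ennreal (measure lborel S)"
    using S by (simp add: emeasure_eq_ennreal_measure)
  have m0: "0 \<le> measure lborel S" by simp
  have "emeasure nu S \<le> (\<integral>\<^sup>+ x. ennreal b * indicator S x \<partial>lborel)"
    unfolding emeasure_nu[OF S(1)]
  proof (intro nn_integral_mono)
    fix x show "ennreal (gd x) * indicator S x \<le> ennreal b * indicator S x"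
    proof (cases "x \<in> S")
      case True
      then have "gd x \<le> b" using ab by blast
      then have "ennreal (gd x) \<le> ennreal b" by (rule ennreal_leI)
      then show ?thesis using True by simp
    qed simp
  qed
  also have "\<dots> = ennreal b * emeasure lborel S" using S by (simp add: nn_integral_cmult_indicator)
  also have "\<dots> = ennreal (b * measure lborel S)" unfolding eS using b0 m0 by (simp add: ennreal_mult)
  finally have up: "emeasure nu S \<le> ennreal (b * measure lborel S)" .
  have "ennreal (a * measure lborel S) = ennreal a * emeasure lborel S" unfolding eS using a m0 by (simp add: ennreal_mult)
  also have "\<dots> = (\<integral>\<^sup>+ x. ennreal a * indicator S x \<partial>lborel)" using S by (simp add: nn_integral_cmult_indicator)
  also have "\<dots> \<le> emeasure nu S"
    unfolding emeasure_nu[OF S(1)]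
  proof (intro nn_integral_mono)
    fix x show "ennreal a * indicator S x \<le> ennreal (gd x) * indicator S x"
    proof (cases "x \<in> S")
      case True
      then have "a \<le> gd x" using ab by blast
      then have "ennreal a \<le> ennreal (gd x)" by (rule ennreal_leI)
      then show ?thesis using True by simp
    qed simp
  qed
  finally have lo: "ennreal (a * measure lborel S) \<le> emeasure nu S" .
  have fin: "emeasure nu S \<noteq> \<infinity>" using up ennreal_less_top[of "b * measure lborel S"] by (auto simp: top_unique)
  show e: "emeasure nu S = ennreal (measure nu S)" using fin by (simp add: emeasure_eq_ennreal_measure)
  show "measure nu S \<le> b * measure lborel S"
    using up unfolding e by (subst (asm) ennreal_le_iff) (use b0 m0 in auto)
  show "a * measure lborel S \<le> measure nu S"
    using lo unfolding e by (subst (asm) ennreal_le_iff) auto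
qed

context ppp begin

lemma cnt_sets2:
  assumes "B1 \<in> sets lborel" "bounded B1" "B2 \<in> sets lborel" "bounded B2"
  shows "{\<omega>\<in>space M. Q1 (card (P \<omega> \<inter> B1)) \<and> Q2 (card (P \<omega> \<inter> B2))} \<in> sets M"
proof -
  have "{\<omega>\<in>space M. Q1 (card (P \<omega> \<inter> B1)) \<and> Q2 (card (P \<omega> \<inter> B2))}
     = {\<omega>\<in>space M. Q1 (card (P \<omega> \<inter> B1))} \<inter> {\<omega>\<in>space M. Q2 (card (P \<omega> \<inter> B2))}" by auto
  thus ?thesis using assms by (simp add: sets.Int cnt_sets)
qed

lemma NE_disj: "S1 \<inter> S2 = {} \<Longrightarrow> NE S1 \<inter> NE S2 = {}"
proof (rule ccontr)
  assume d: "S1 \<inter> S2 = {}" and "NE S1 \<inter> NE S2 \<noteq> {}"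
  then obtain \<omega> C1 C2 where C1: "C1 \<in> P \<omega>" "\<forall>p\<in>P \<omega>. p \<noteq> C1 \<longrightarrow> norm C1 < norm p" "C1 \<in> S1"
    and C2: "C2 \<in> P \<omega>" "\<forall>p\<in>P \<omega>. p \<noteq> C2 \<longrightarrow> norm C2 < norm p" "C2 \<in> S2"
    unfolding NE_def by blast
  have "C1 \<noteq> C2" using d C1 C2 by blast
  then show False using C1 C2 by fastforce
qed

lemma NE_UN: "NE (\<Union>i\<in>I. S i) = (\<Union>i\<in>I. NE (S i))"
  unfolding NE_def by blast

lemma NE_sum:
  assumes "finite I" "disjoint_family_on S I" "\<And>i. i \<in> I \<Longrightarrow> S i \<in> sets lborel"
  shows "measure M (NE (\<Union>i\<in>I. S i)) = (\<Sum>i\<in>I. measure M (NE (S i)))"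
proof -
  interpret prob_space M by (rule ps)
  show ?thesis unfolding NE_UN
    by (rule finite_measure_finite_Union)
       (use assms in \<open>auto intro: NE_sets simp: disjoint_family_on_def intro!: NE_disj\<close>)
qed

lemma NE_upper:
  assumes S: "S \<in> sets lborel" "bounded S" and t: "0 \<le> t" "\<And>c. c \<in> S \<Longrightarrow> t \<le> norm c"
  shows "measure M (NE S) \<le> exp (- pi * t^2) * measure lborel S"
proof -
  interpret prob_space M by (rule ps)
  let ?U = "{\<omega>\<in>space M. card (P \<omega> \<inter> ball 0 t) \<in> {0} \<and> card (P \<omega> \<inter> S) \<in> {k. 1 \<le> k}}"
  have sub: "NE S \<subseteq> ?U"
  proof
    fix \<omega> assume "\<omega> \<in> NE S"
    then obtain C where om: "\<omega> \<in> space M" and C: "C \<in> P \<omega>" "\<forall>p\<in>P \<omega>. p \<noteq> C \<longrightarrow> norm C < norm p" "C \<in> S"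
      unfolding NE_def by blast
    have "P \<omega> \<inter> ball 0 t = {}"
    proof (rule ccontr)
      assume "P \<omega> \<inter> ball 0 t \<noteq> {}"
      then obtain p where p: "p \<in> P \<omega>" "norm p < t" by auto
      have "t \<le> norm C" using t C by auto
      hence "p \<noteq> C" using p by auto
      thus False using C p \<open>t \<le> norm C\<close> by fastforce
    qed
    moreover have "card (P \<omega> \<inter> S) \<noteq> 0" using fin[OF om S(2)] C by auto
    ultimately show "\<omega> \<in> ?U" using om by auto
  qed
  have "measure M ?U = measure M {\<omega>\<in>space M. card (P \<omega> \<inter> ball 0 t) \<in> {0}} * measure M {\<omega>\<in>space M. card (P \<omega> \<inter> S) \<in> {k. 1 \<le> k}}"
  proof (rule indep2)
    show "ball 0 t \<inter> S = {}"
    proof (intro equalityI subsetI)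
      fix c assume "c \<in> ball 0 t \<inter> S"
      then have "norm c < t" "t \<le> norm c" using t(2)[of c] by auto
      thus "c \<in> {}" by simp
    qed simp
  qed (use S in auto)
  also have "\<dots> = exp (- (pi * t^2)) * (1 - exp (- measure lborel S))"
    using cnt0[of "ball 0 t"] cnt_ge1[OF S] disk_area[OF t(1)] by simp
  also have "\<dots> \<le> exp (- pi * t^2) * measure lborel S"
  proof -
    have "1 - exp (- measure lborel S) \<le> measure lborel S" using exp_ge_add_one_self[of "- measure lborel S"] by simp
    hence "exp (- (pi * t^2)) * (1 - exp (- measure lborel S)) \<le> exp (- (pi * t^2)) * measure lborel S"
      by (intro mult_left_mono) auto
    thus ?thesis by simp
  qed
  finally have "measure M ?U \<le> exp (- pi * t^2) * measure lborel S" .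
  moreover have "measure M (NE S) \<le> measure M ?U"
    by (rule finite_measure_mono[OF sub]) (rule cnt_sets2, use S in auto)
  ultimately show ?thesis by linarith
qed

lemma NE_lower:
  assumes S: "S \<in> sets lborel" and t: "0 \<le> t" "\<And>c. c \<in> S \<Longrightarrow> norm c \<le> t"
  shows "exp (- pi * t^2) * measure lborel S \<le> measure M (NE S)"
proof -
  interpret prob_space M by (rule ps)
  have Sc: "S \<subseteq> cball 0 t" using t by auto
  hence bS: "bounded S" by (rule bounded_subset[OF bounded_cball])
  let ?L = "{\<omega>\<in>space M. card (P \<omega> \<inter> (cball 0 t - S)) \<in> {0} \<and> card (P \<omega> \<inter> S) \<in> {1}}"
  have sub: "?L \<subseteq> NE S"
  proof
    fix \<omega> assume L: "\<omega> \<in> ?L"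
    hence om: "\<omega> \<in> space M" by auto
    from L have c1: "card (P \<omega> \<inter> S) = 1" by simp
    then obtain C where C: "P \<omega> \<inter> S = {C}" by (auto simp: card_1_singleton_iff)
    have finD: "finite (P \<omega> \<inter> (cball 0 t - S))" using fin[OF om, of "cball 0 t - S"] by auto
    from L have "card (P \<omega> \<inter> (cball 0 t - S)) = 0" by simp
    hence e0: "P \<omega> \<inter> (cball 0 t - S) = {}" using finD by simp
    have "\<forall>p\<in>P \<omega>. p \<noteq> C \<longrightarrow> norm C < norm p"
    proof (intro ballI impI)
      fix p assume p: "p \<in> P \<omega>" "p \<noteq> C"
      have "p \<notin> S" using p C by blast
      hence "p \<notin> cball 0 t" using e0 p by blast
      hence "t < norm p" by simp
      moreover have "norm C \<le> t" using C t by blast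
      ultimately show "norm C < norm p" by simp
    qed
    then show "\<omega> \<in> NE S" unfolding NE_def using om C by blast
  qed
  have "measure M ?L = measure M {\<omega>\<in>space M. card (P \<omega> \<inter> (cball 0 t - S)) \<in> {0}} * measure M {\<omega>\<in>space M. card (P \<omega> \<inter> S) \<in> {1}}"
    by (rule indep2) (use S bS in \<open>auto intro: bounded_subset[OF bounded_cball]\<close>)
  also have "measure lborel (cball 0 t - S) = pi * t^2 - measure lborel S"
    using Sc S cdisk_area[OF t(1)] by (subst measure_Diff) (auto simp: emeasure_cball t)
  hence "measure M {\<omega>\<in>space M. card (P \<omega> \<inter> (cball 0 t - S)) \<in> {0}} * measure M {\<omega>\<in>space M. card (P \<omega> \<inter> S) \<in> {1}}
     = exp (- (pi * t^2 - measure lborel S)) * (measure lborel S * exp (- measure lborel S))"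
    using cnt0[of "cball 0 t - S"] cnt1[OF S bS] S bS by (auto intro: bounded_subset[OF bounded_cball])
  also have "\<dots> = exp (- pi * t^2) * measure lborel S"
  proof -
    have "exp (- (pi * t^2 - measure lborel S)) * exp (- measure lborel S) = exp (- pi * t^2)"
      by (simp add: exp_add[symmetric])
    moreover have "\<And>X Y m::real. X * (m * Y) = (X * Y) * m" by (simp add: ac_simps)
    ultimately show ?thesis by simp
  qed
  finally have "measure M ?L = exp (- pi * t^2) * measure lborel S" .
  moreover have "measure M ?L \<le> measure M (NE S)"
    by (rule finite_measure_mono[OF sub]) (rule NE_sets[OF S])
  ultimately show ?thesis by linarith
qed

end

lemma exp_diff_le: fixes a b :: real shows "0 \<le> a \<Longrightarrow> a \<le> b \<Longrightarrow> exp (- a) - exp (- b) \<le> b - a"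
proof -
  assume ab: "0 \<le> a" "a \<le> b"
  have "exp (- b) = exp (- a) * exp (- (b - a))" using exp_add[of "- a" "- (b - a)"] by simp
  moreover have "1 - (b - a) \<le> exp (- (b - a))" using exp_ge_add_one_self[of "- (b - a)"] by linarith
  moreover have "exp (- a) \<le> 1" using ab by simp
  ultimately have "exp (- a) - exp (- b) = exp (- a) * (1 - exp (- (b - a)))" by (simp add: algebra_simps)
  also have "\<dots> \<le> 1 * (b - a)"
  proof (rule mult_mono)
    show "1 - exp (- (b - a)) \<le> b - a" using exp_ge_add_one_self[of "- (b - a)"] by linarith
  qed (use ab in auto)
  finally show ?thesis by simp
qed

lemma annulus_sets: "S \<in> sets lborel \<Longrightarrow> S \<inter> {c::real\<times>real. a \<le> norm c \<and> norm c < b} \<in> sets lborel"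
proof -
  assume S: "S \<in> sets lborel"
  have "{c::real\<times>real. a \<le> norm c \<and> norm c < b} = (\<lambda>c. norm c) -` {a..<b} \<inter> space borel" by auto
  also have "\<dots> \<in> sets borel" by (rule measurable_sets[of _ borel borel]) auto
  finally show ?thesis using S by simp
qed

lemma annulus_decomp:
  fixes S :: "(real\<times>real) set" and T :: real and n :: nat
  assumes T: "0 < T" "\<And>c. c \<in> S \<Longrightarrow> norm c < T" and n: "0 < n"
  defines "Sk \<equiv> \<lambda>k. S \<inter> {c. real k * (T / n) \<le> norm c \<and> norm c < real (Suc k) * (T / n)}"
  shows "(\<Union>k<n. Sk k) = S" "disjoint_family_on Sk {..<n}"
proof -
  let ?h = "T / n"
  have h: "0 < ?h" using T n by simp
  show "(\<Union>k<n. Sk k) = S"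
  proof (intro equalityI subsetI)
    fix c assume c: "c \<in> S"
    define k where "k = nat \<lfloor>norm c / ?h\<rfloor>"
    have x0: "0 \<le> norm c / ?h" by (rule divide_nonneg_pos) (use h in auto)
    have rk: "real k = of_int \<lfloor>norm c / ?h\<rfloor>" unfolding k_def using x0 by simp
    have fl: "real k \<le> norm c / ?h" "norm c / ?h < real k + 1"
      unfolding rk by (rule of_int_floor_le) (rule real_of_int_floor_add_one_gt)
    have "real k * ?h \<le> norm c" using fl(1) unfolding pos_le_divide_eq[OF h] .
    moreover have "norm c < (real k + 1) * ?h" using fl(2) unfolding pos_divide_less_eq[OF h] .
    hence "norm c < real (Suc k) * ?h" by (simp only: of_nat_Suc add.commute)
    moreover have "k < n"
    proof -
      have "norm c / ?h < T / ?h" by (rule divide_strict_right_mono[OF T(2)[OF c] h])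
      also have "T / ?h = n" using T n by simp
      finally show ?thesis using fl(1) by linarith
    qed
    ultimately show "c \<in> (\<Union>k<n. Sk k)" using c unfolding Sk_def by blast
  qed (auto simp: Sk_def)
  show "disjoint_family_on Sk {..<n}"
  proof (unfold disjoint_family_on_def, intro ballI impI)
    fix i j assume ij: "i \<in> {..<n}" "j \<in> {..<n}" "i \<noteq> j"
    show "Sk i \<inter> Sk j = {}"
    proof (rule ccontr)
      assume "Sk i \<inter> Sk j \<noteq> {}"
      then obtain c where "c \<in> Sk i" "c \<in> Sk j" by blast
      then have "real i * ?h \<le> norm c" "norm c < real (Suc i) * ?h"
        "real j * ?h \<le> norm c" "norm c < real (Suc j) * ?h" unfolding Sk_def by auto
      hence "real i < real (Suc j)" "real j < real (Suc i)" using h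
        by (meson le_less_trans mult_less_cancel_right_pos)+
      thus False using ij by linarith
    qed
  qed
qed

context ppp begin

lemma NE_nu:
  assumes S: "S \<in> sets lborel" "bounded S"
  shows "measure M (NE S) = measure nu S"
proof -
  obtain b where b: "b > 0" "\<And>x. x \<in> S \<Longrightarrow> norm x \<le> b" using S(2) unfolding bounded_pos by blast
  define T where "T = b + 1"
  have T: "0 < T" "\<And>c. c \<in> S \<Longrightarrow> norm c < T"
  proof -
    show "0 < T" using b unfolding T_def by simp
    fix c assume "c \<in> S" then have "norm c \<le> b" by (rule b(2))
    thus "norm c < T" unfolding T_def by simp
  qed
  have key: "\<bar>measure M (NE S) - measure nu S\<bar> \<le> 2 * pi * T * (T / n) * measure lborel S" if n: "0 < n" for n :: nat
  proof -
    let ?h = "T / n"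
    have h: "0 < ?h" using T n by simp
    define t where "t = (\<lambda>k::nat. real k * ?h)"
    define Sk where "Sk = (\<lambda>k. S \<inter> {c. real k * (T / n) \<le> norm c \<and> norm c < real (Suc k) * (T / n)})"
    have U: "(\<Union>k<n. Sk k) = S" and D: "disjoint_family_on Sk {..<n}"
      using annulus_decomp[OF T n] unfolding Sk_def by blast+
    have Sks: "Sk k \<in> sets lborel" for k unfolding Sk_def by (rule annulus_sets[OF S(1)])
    have Skb: "bounded (Sk k)" for k unfolding Sk_def using S(2) by (rule bounded_subset) auto
    have Skf: "emeasure lborel (Sk k) < \<infinity>" for k by (rule emeasure_bounded_finite[OF Skb])
    have tk: "0 \<le> t k" for k unfolding t_def by (rule mult_nonneg_nonneg) (use h in auto)
    have tmono: "t k \<le> t (Suc k)" for k unfolding t_def by (rule mult_right_mono) (use h in auto)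
    have piece: "\<bar>measure M (NE (Sk k)) - measure nu (Sk k)\<bar> \<le> 2 * pi * T * ?h * measure lborel (Sk k)" if k: "k < n" for k
    proof -
      have inS: "t k \<le> norm c \<and> norm c \<le> t (Suc k)" if "c \<in> Sk k" for c
        using that unfolding Sk_def t_def by auto
      have q1: "measure M (NE (Sk k)) \<le> exp (- pi * (t k)^2) * measure lborel (Sk k)"
        by (rule NE_upper[OF Sks Skb tk]) (use inS in blast)
      have q2: "exp (- pi * (t (Suc k))^2) * measure lborel (Sk k) \<le> measure M (NE (Sk k))"
        by (rule NE_lower[OF Sks]) (use inS tk in blast)+
      have gb: "exp (- pi * (t (Suc k))^2) \<le> gd c \<and> gd c \<le> exp (- pi * (t k)^2)" if "c \<in> Sk k" for c
        using inS[OF that] tk[of k] unfolding gd_def by (auto intro!: power_mono)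
      have n1: "exp (- pi * (t (Suc k))^2) * measure lborel (Sk k) \<le> measure nu (Sk k)"
        and n2: "measure nu (Sk k) \<le> exp (- pi * (t k)^2) * measure lborel (Sk k)"
        using nu_bounds[OF Sks Skf gb] by auto
      have A: "\<bar>measure M (NE (Sk k)) - measure nu (Sk k)\<bar> \<le> (exp (- pi * (t k)^2) - exp (- pi * (t (Suc k))^2)) * measure lborel (Sk k)"
        using q1 q2 n1 n2 by (simp add: left_diff_distrib abs_le_iff)
      have "exp (- pi * (t k)^2) - exp (- pi * (t (Suc k))^2) \<le> pi * (t (Suc k))^2 - pi * (t k)^2"
        using exp_diff_le[of "pi * (t k)^2" "pi * (t (Suc k))^2"] tk tmono by (simp add: power_mono)
      also have "pi * (t (Suc k))^2 - pi * (t k)^2 = pi * (t (Suc k) + t k) * ?h"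
      proof -
        have "\<And>h. pi * (real (Suc k) * h)^2 - pi * (real k * h)^2 = pi * (real (Suc k) * h + real k * h) * h"
          by (simp add: power2_eq_square algebra_simps)
        thus ?thesis unfolding t_def by blast
      qed
      also have "\<dots> \<le> pi * (2 * T) * ?h"
      proof -
        have "real (Suc k) \<le> real n" using k by simp
        hence "real (Suc k) * ?h \<le> real n * ?h" by (rule mult_right_mono) (use h in auto)
        also have "real n * ?h = T" using n by simp
        finally have "t (Suc k) \<le> T" unfolding t_def .
        moreover have "t k \<le> T" using tmono[of k] \<open>t (Suc k) \<le> T\<close> by linarith
        ultimately show ?thesis using h by (intro mult_right_mono mult_left_mono) auto
      qed
      finally have B: "exp (- pi * (t k)^2) - exp (- pi * (t (Suc k))^2) \<le> pi * (2 * T) * ?h" .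
      have "(exp (- pi * (t k)^2) - exp (- pi * (t (Suc k))^2)) * measure lborel (Sk k) \<le> pi * (2 * T) * ?h * measure lborel (Sk k)"
        by (rule mult_right_mono[OF B]) simp
      also have "pi * (2 * T) * ?h * measure lborel (Sk k) = 2 * pi * T * ?h * measure lborel (Sk k)" by simp
      finally show ?thesis using A by linarith
    qed
    have "measure M (NE S) = (\<Sum>k<n. measure M (NE (Sk k)))"
      using NE_sum[of "{..<n}" Sk] U D Sks by simp
    moreover have "measure nu S = (\<Sum>k<n. measure nu (Sk k))"
      unfolding U[symmetric]
    proof (rule measure_finite_Union)
      fix k show "emeasure nu (Sk k) \<noteq> \<infinity>"
      proof -
        have "emeasure nu (Sk k) = ennreal (measure nu (Sk k))"
          by (rule nu_bounds(3)[OF Sks Skf, where a=0 and b=1]) (auto simp: gd_def)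
        thus ?thesis by simp
      qed
    qed (use D Sks in auto)
    moreover have "measure lborel S = (\<Sum>k<n. measure lborel (Sk k))"
      unfolding U[symmetric]
      by (rule measure_finite_Union) (use D Sks Skf in \<open>auto simp: less_top\<close>)
    ultimately have "\<bar>measure M (NE S) - measure nu S\<bar> = \<bar>\<Sum>k<n. measure M (NE (Sk k)) - measure nu (Sk k)\<bar>"
      by (simp add: sum_subtractf)
    also have "\<dots> \<le> (\<Sum>k<n. \<bar>measure M (NE (Sk k)) - measure nu (Sk k)\<bar>)" by (rule sum_abs)
    also have "\<dots> \<le> (\<Sum>k<n. 2 * pi * T * ?h * measure lborel (Sk k))" by (intro sum_mono piece) simp
    also have "\<dots> = 2 * pi * T * ?h * measure lborel S"
      using \<open>measure lborel S = _\<close> by (simp add: sum_distrib_left)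
    finally show ?thesis .
  qed
  show ?thesis
  proof (rule ccontr)
    assume ne: "measure M (NE S) \<noteq> measure nu S"
    define d where "d = \<bar>measure M (NE S) - measure nu S\<bar>"
    have d: "0 < d" using ne by (simp add: d_def)
    define K where "K = 2 * pi * T * T * measure lborel S"
    obtain n :: nat where n: "K / d < n" using reals_Archimedean2 by blast
    have K0: "0 \<le> K" using T by (simp add: K_def)
    have "0 \<le> K / d" using K0 d by simp
    hence npos: "0 < n" using n by linarith
    have "d \<le> K / n" using key[OF npos] by (simp add: d_def K_def)
    also have "K / n < d" using n d npos by (simp add: field_simps)
    finally show False by simp
  qed
qed

end

context ppp begin

lemma NE_ball:
  assumes r: "0 < r"
  shows "measure M (NE (ball 0 r)) = 1 - exp (- pi * r^2)"
proof -
  interpret prob_space M by (rule ps)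
  let ?E = "{\<omega>\<in>space M. 1 \<le> card (P \<omega> \<inter> ball 0 r)}"
  have PE: "measure M ?E = 1 - exp (- pi * r^2)"
    using cnt_ge1[of "ball 0 r"] disk_area[of r 0] r by simp
  have sub1: "NE (ball 0 r) \<subseteq> ?E"
  proof
    fix \<omega> assume "\<omega> \<in> NE (ball 0 r)"
    then obtain C where om: "\<omega> \<in> space M" and C: "C \<in> P \<omega>" "C \<in> ball 0 r" unfolding NE_def by blast
    have "card (P \<omega> \<inter> ball 0 r) \<noteq> 0" using fin[OF om, of "ball 0 r"] C by auto
    thus "\<omega> \<in> ?E" using om by simp
  qed
  have up: "measure M (NE (ball 0 r)) \<le> 1 - exp (- pi * r^2)"
    using finite_measure_mono[OF sub1] PE by (simp add: cnt_sets)
  have key: "1 - exp (- pi * r^2) \<le> measure M (NE (ball 0 r)) + 4 * pi^2 * r^4 / n" if n: "0 < n" for n :: nat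
  proof -
    let ?h = "r / n"
    have h: "0 < ?h" using r n by simp
    define Sk where "Sk = (\<lambda>k. ball (0::real\<times>real) r \<inter> {c. real k * (r / n) \<le> norm c \<and> norm c < real (Suc k) * (r / n)})"
    have U: "(\<Union>k<n. Sk k) = ball 0 r"
      using annulus_decomp[OF r _ n, of "ball 0 r"] unfolding Sk_def by auto
    have Sks: "Sk k \<in> sets lborel" for k unfolding Sk_def by (rule annulus_sets) simp
    have Skb: "bounded (Sk k)" for k unfolding Sk_def by (rule bounded_subset[of "ball 0 r"]) auto
    let ?T = "\<lambda>k. {\<omega>\<in>space M. 2 \<le> card (P \<omega> \<inter> Sk k)}"
    have sub2: "?E \<subseteq> NE (ball 0 r) \<union> (\<Union>k<n. ?T k)"
    proof
      fix \<omega> assume "\<omega> \<in> ?E"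
      hence om: "\<omega> \<in> space M" and ne: "1 \<le> card (P \<omega> \<inter> ball 0 r)" by auto
      let ?F = "P \<omega> \<inter> ball 0 r"
      have finF: "finite ?F" by (rule fin[OF om]) simp
      have neF: "?F \<noteq> {}" using ne by auto
      have "Min (norm ` ?F) \<in> norm ` ?F" using finF neF by (intro Min_in) auto
      then obtain C where CF: "C \<in> ?F" and Cm: "norm C = Min (norm ` ?F)" by auto
      have Cle: "norm C \<le> norm p" if "p \<in> P \<omega>" for p
      proof (cases "p \<in> ball 0 r")
        case True
        hence "p \<in> ?F" using that by simp
        thus ?thesis unfolding Cm using finF by simp
      next
        case False
        hence "r \<le> norm p" by simp
        moreover have "norm C < r" using CF by simp
        ultimately show ?thesis by simp
      qed
      show "\<omega> \<in> NE (ball 0 r) \<union> (\<Union>k<n. ?T k)"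
      proof (cases "\<forall>p\<in>P \<omega>. p \<noteq> C \<longrightarrow> norm C < norm p")
        case True
        hence "\<omega> \<in> NE (ball 0 r)" unfolding NE_def using om CF by blast
        thus ?thesis by blast
      next
        case False
        then obtain p where p: "p \<in> P \<omega>" "p \<noteq> C" "norm p \<le> norm C" by auto
        hence pn: "norm p = norm C" using Cle[OF p(1)] by simp
        have "C \<in> (\<Union>k<n. Sk k)" using CF U by simp
        then obtain k where k: "k < n" "C \<in> Sk k" by auto
        have "p \<in> Sk k" using k(2) pn unfolding Sk_def by simp
        hence "{C, p} \<subseteq> P \<omega> \<inter> Sk k" using k(2) CF p by auto
        moreover have "finite (P \<omega> \<inter> Sk k)" by (rule fin[OF om Skb])
        ultimately have "card {C, p} \<le> card (P \<omega> \<inter> Sk k)" by (rule card_mono[rotated])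
        moreover have "card {C, p} = 2" using p(2) by simp
        ultimately have "\<omega> \<in> ?T k" using om by simp
        thus ?thesis using k(1) by blast
      qed
    qed
    have Tsets: "?T k \<in> sets M" for k by (rule cnt_sets[OF Sks Skb])
    have "measure M ?E \<le> measure M (NE (ball 0 r) \<union> (\<Union>k<n. ?T k))"
      by (rule finite_measure_mono[OF sub2]) (intro sets.Un NE_sets sets.finite_UN Tsets; simp)
    also have "\<dots> \<le> measure M (NE (ball 0 r)) + measure M (\<Union>k<n. ?T k)"
      by (rule measure_Un_le) (intro NE_sets sets.finite_UN Tsets; simp)+
    also have "measure M (\<Union>k<n. ?T k) \<le> (\<Sum>k<n. measure M (?T k))"
      by (rule measure_UNION_le) (auto intro: Tsets)
    also have "\<dots> \<le> (\<Sum>k<n. (2 * pi * r * ?h)^2)"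
    proof (rule sum_mono)
      fix k assume k: "k \<in> {..<n}"
      have "measure M (?T k) \<le> (measure lborel (Sk k))^2" by (rule cnt_ge2[OF Sks Skb])
      also have "measure lborel (Sk k) \<le> 2 * pi * r * ?h"
      proof -
        let ?a = "real k * ?h" and ?b = "real (Suc k) * ?h"
        have a0: "0 \<le> ?a" by (rule mult_nonneg_nonneg) (use h in auto)
        have ab: "?a \<le> ?b" by (rule mult_right_mono) (use h in auto)
        have "real (Suc k) \<le> real n" using k by simp
        hence "?b \<le> real n * ?h" by (rule mult_right_mono) (use h in auto)
        also have "real n * ?h = r" using n by simp
        finally have br: "?b \<le> r" .
        have "Sk k \<subseteq> ball 0 ?b - ball 0 ?a" unfolding Sk_def by auto
        hence "measure lborel (Sk k) \<le> measure lborel (ball (0::real\<times>real) ?b - ball 0 ?a)"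
        proof (intro measure_mono_fmeasurable Sks fmeasurableI)
          have "bounded (ball (0::real\<times>real) ?b - ball 0 ?a)" by (rule bounded_subset[OF bounded_ball]) auto
          thus "emeasure lborel (ball (0::real\<times>real) ?b - ball 0 ?a) < \<infinity>" by (rule emeasure_bounded_finite)
        qed auto
        also have "\<dots> = pi * ?b^2 - pi * ?a^2"
          using ab a0 disk_area[of ?a 0] disk_area[of ?b 0]
          by (subst measure_Diff) (auto simp: emeasure_ball)
        also have "\<dots> = pi * (?b + ?a) * ?h"
        proof -
          have "\<And>h. pi * (real (Suc k) * h)^2 - pi * (real k * h)^2 = pi * (real (Suc k) * h + real k * h) * h"
            by (simp add: power2_eq_square algebra_simps)
          thus ?thesis by blast
        qed
        also have "\<dots> \<le> pi * (2 * r) * ?h"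
          using h br ab by (intro mult_right_mono mult_left_mono) auto
        also have "pi * (2 * r) * ?h = 2 * pi * r * ?h" by (simp only: ac_simps)
        finally show ?thesis .
      qed
      hence "(measure lborel (Sk k))^2 \<le> (2 * pi * r * ?h)^2" by (intro power_mono) auto
      finally show "measure M (?T k) \<le> (2 * pi * r * ?h)^2" .
    qed
    also have "(\<Sum>k<n. (2 * pi * r * ?h)^2) = 4 * pi^2 * r^4 / n"
      using n by (simp add: power2_eq_square field_simps power4_eq_xxxx)
    finally show ?thesis using PE by simp
  qed
  have lo: "1 - exp (- pi * r^2) \<le> measure M (NE (ball 0 r))"
  proof (rule ccontr)
    assume nt: "\<not> ?thesis"
    define d where "d = 1 - exp (- pi * r^2) - measure M (NE (ball 0 r))"
    have d: "0 < d" using nt by (simp add: d_def)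
    define K where "K = 4 * pi^2 * r^4"
    obtain n :: nat where n: "K / d < n" using reals_Archimedean2 by blast
    have K0: "0 \<le> K" by (simp add: K_def)
    have "0 \<le> K / d" using K0 d by simp
    hence npos: "0 < n" using n by linarith
    have "d \<le> K / n" using key[OF npos] by (simp add: d_def K_def)
    also have "K / n < d" using n d npos by (simp add: field_simps)
    finally show False by simp
  qed
  show ?thesis using up lo by linarith
qed

end

definition fg :: "real \<Rightarrow> real" where "fg x = exp (- pi * x^2)"

lemma fg_nd: "fg = normal_density 0 (1 / sqrt (2 * pi))"
proof
  fix x
  have s: "(1 / sqrt (2 * pi))^2 = 1 / (2 * pi)" by (simp add: power_divide)
  show "fg x = normal_density 0 (1 / sqrt (2 * pi)) x"
    unfolding fg_def normal_density_def s by (simp add: field_simps)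
qed

lemma fg_int: "integrable lborel fg" unfolding fg_nd by simp
lemma fg_integral: "(\<integral>x. fg x \<partial>lborel) = 1" unfolding fg_nd by simp
lemma fg_meas[measurable]: "fg \<in> borel_measurable borel" unfolding fg_def by measurable
lemma fg_nonneg: "0 \<le> fg x" by (simp add: fg_def)

lemma erfc_fg: "erfc (sqrt pi / 2) = 2 * (\<integral>x. indicator {1/2..} x * fg x \<partial>lborel)"
proof -
  have sp: "0 < sqrt pi" by simp
  have "(LBINT t:{sqrt pi / 2..}. exp (- (t ^ 2))) = (\<integral>t. indicator {sqrt pi / 2..} t * exp (- (t ^ 2)) \<partial>lborel)"
    by (simp add: set_lebesgue_integral_def)
  also have "\<dots> = \<bar>sqrt pi\<bar> *\<^sub>R (\<integral>x. indicator {sqrt pi / 2..} (0 + sqrt pi * x) * exp (- ((0 + sqrt pi * x) ^ 2)) \<partial>lborel)"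
    by (rule lborel_integral_real_affine) simp
  also have "(\<lambda>x. indicator {sqrt pi / 2..} (0 + sqrt pi * x) * exp (- ((0 + sqrt pi * x) ^ 2))) = (\<lambda>x. indicator {1/2..} x * fg x)"
  proof
    fix x
    have "(sqrt pi / 2 \<le> sqrt pi * x) = (1/2 \<le> x)" using sp by (simp add: field_simps)
    moreover have "(sqrt pi * x)^2 = pi * x^2" by (simp add: power_mult_distrib)
    ultimately show "indicator {sqrt pi / 2..} (0 + sqrt pi * x) * exp (- ((0 + sqrt pi * x) ^ 2)) = indicator {1/2..} x * fg x"
      by (simp add: fg_def indicator_def)
  qed
  finally show ?thesis unfolding erfc_def using sp by simp
qed

lemma fg_le_sym: "(\<integral>x. indicator {..-1/2} x * fg x \<partial>lborel) = (\<integral>x. indicator {1/2..} x * fg x \<partial>lborel)"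
proof -
  have "(\<integral>x. indicator {..-1/2} x * fg x \<partial>lborel) = \<bar>-1\<bar> *\<^sub>R (\<integral>x. indicator {..-1/2} (0 + -1 * x) * fg (0 + -1 * x) \<partial>lborel)"
    by (rule lborel_integral_real_affine) simp
  also have "(\<lambda>x. indicator {..-1/2} (0 + -1 * x) * fg (0 + -1 * x)) = (\<lambda>x::real. indicator {1/2..} x * fg x)"
    by (auto simp: fg_def indicator_def)
  finally show ?thesis by simp
qed

lemma fg_mid: "(\<integral>x. indicator {-1/2<..<1/2} x * fg x \<partial>lborel) = 1 - erfc (sqrt pi / 2)"
proof -
  have i: "integrable lborel (\<lambda>x. indicator A x * fg x)" if "A \<in> sets borel" for A
    using integrable_mult_indicator[OF _ fg_int, of A] that by simp
  have "fg = (\<lambda>x. indicator {-1/2<..<1/2} x * fg x + (indicator {1/2..} x * fg x + indicator {..-1/2} x * fg x))"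
    by (auto simp: indicator_def)
  hence "1 = (\<integral>x. indicator {-1/2<..<1/2} x * fg x + (indicator {1/2..} x * fg x + indicator {..-1/2} x * fg x) \<partial>lborel)"
    using fg_integral by simp
  also have "\<dots> = (\<integral>x. indicator {-1/2<..<1/2} x * fg x \<partial>lborel) + ((\<integral>x. indicator {1/2..} x * fg x \<partial>lborel) + (\<integral>x. indicator {..-1/2} x * fg x \<partial>lborel))"
    by (simp add: i)
  finally show ?thesis using fg_le_sym erfc_fg by simp
qed

lemma nn_fg_mid: "(\<integral>\<^sup>+x. ennreal (indicator {-1/2<..<1/2} x * fg x) \<partial>lborel) = ennreal (1 - erfc (sqrt pi / 2))"
  unfolding fg_mid[symmetric]
  by (rule nn_integral_eq_integral) (auto intro!: integrable_mult_indicator[OF _ fg_int, simplified] simp: fg_nonneg)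

lemma nn_fg: "(\<integral>\<^sup>+x. ennreal (fg x) \<partial>lborel) = 1"
  using nn_integral_eq_integral[OF fg_int] fg_integral fg_nonneg by simp

definition strip :: "(real \<times> real) set" where "strip = {c. \<bar>fst c\<bar> < 1/2}"

lemma strip_sets: "strip \<in> sets lborel"
proof -
  have "strip = fst -` {-1/2<..<1/2} \<inter> space borel" by (auto simp: strip_def abs_less_iff)
  also have "\<dots> \<in> sets borel" by (rule measurable_sets[of _ borel borel]) (auto intro!: borel_measurable_continuous_onI continuous_intros)
  finally show ?thesis by simp
qed

lemma strip_sets'[measurable]: "strip \<in> sets borel" using strip_sets by simp

lemma gd_split: "gd (x, y) = fg x * fg y"
  by (simp add: gd_def fg_def norm_Pair exp_add[symmetric] algebra_simps)

lemma nu_strip: "emeasure nu strip = ennreal (1 - erfc (sqrt pi / 2))"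
proof -
  have "emeasure nu strip = (\<integral>\<^sup>+ c. ennreal (gd c) * indicator strip c \<partial>(lborel \<Otimes>\<^sub>M lborel))"
    by (simp add: emeasure_nu[OF strip_sets] lborel_prod)
  also have "\<dots> = (\<integral>\<^sup>+ x. \<integral>\<^sup>+ y. ennreal (gd (x, y)) * indicator strip (x, y) \<partial>lborel \<partial>lborel)"
    by (rule lborel.nn_integral_fst[symmetric]) (unfold lborel_prod, measurable)
  also have "\<dots> = (\<integral>\<^sup>+ x. ennreal (indicator {-1/2<..<1/2} x * fg x) * (\<integral>\<^sup>+ y. ennreal (fg y) \<partial>lborel) \<partial>lborel)"
  proof (rule nn_integral_cong)
    fix x :: real
    have "(\<lambda>y. ennreal (gd (x, y)) * indicator strip (x, y)) = (\<lambda>y. ennreal (indicator {-1/2<..<1/2} x * fg x) * ennreal (fg y))"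
      by (auto simp: gd_split strip_def indicator_def abs_less_iff ennreal_mult fg_nonneg)
    thus "(\<integral>\<^sup>+ y. ennreal (gd (x, y)) * indicator strip (x, y) \<partial>lborel) = ennreal (indicator {-1/2<..<1/2} x * fg x) * (\<integral>\<^sup>+ y. ennreal (fg y) \<partial>lborel)"
      by (simp add: nn_integral_cmult)
  qed
  also have "\<dots> = ennreal (1 - erfc (sqrt pi / 2))" unfolding nn_fg by (simp only: mult.right_neutral nn_fg_mid)
  finally show ?thesis .
qed

definition Racute :: "(real \<times> real) set" where "Racute = {c. acute_triangle (-1/2, 0) (1/2, 0) c}"

lemma Racute_eq: "Racute = strip - cball 0 (1/2)"
proof (intro set_eqI)
  fix c :: "real \<times> real"
  obtain x y where c: "c = (x, y)" by (cases c)
  have s: "sqrt (1/4) = 1/2" by (simp add: real_sqrt_divide)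
  have n: "(1/2 < norm c) = (1/4 < x^2 + y^2)"
    unfolding c norm_Pair s[symmetric] by (simp add: real_sqrt_less_iff)
  show "c \<in> Racute \<longleftrightarrow> c \<in> strip - cball 0 (1/2)"
    unfolding Racute_def strip_def acute_triangle_def using n
    by (auto simp: c abs_less_iff power2_eq_square algebra_simps)
qed

lemma Racute_sets: "Racute \<in> sets lborel"
  unfolding Racute_eq using strip_sets by simp

lemma nu_R: "measure nu Racute = measure nu strip - measure nu (strip \<inter> cball 0 (1/2))"
proof -
  have "Racute = strip - (strip \<inter> cball 0 (1/2))" unfolding Racute_eq by blast
  moreover have "emeasure nu strip \<noteq> \<infinity>" by (simp add: nu_strip)
  moreover have "measure nu (strip - (strip \<inter> cball 0 (1/2))) = measure nu strip - measure nu (strip \<inter> cball 0 (1/2))"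
    by (rule measure_Diff) (use strip_sets \<open>emeasure nu strip \<noteq> \<infinity>\<close> in auto)
  ultimately show ?thesis by simp
qed

lemma lborel_shell: "measure lborel (cball (0::real\<times>real) (1/2) - ball 0 (1/2)) = 0"
  using cdisk_area[of "1/2" 0] disk_area[of "1/2" 0]
  by (subst measure_Diff) (auto simp: emeasure_cball)

lemma nu_cap: "measure nu (strip \<inter> cball 0 (1/2)) = measure nu (ball 0 (1/2))"
proof -
  let ?S = "strip \<inter> cball 0 (1/2) - ball 0 (1/2)"
  have sub: "ball (0::real\<times>real) (1/2) \<subseteq> strip \<inter> cball 0 (1/2)"
  proof
    fix c :: "real\<times>real" assume c: "c \<in> ball 0 (1/2)"
    have "\<bar>fst c\<bar> \<le> norm c" by (cases c) (simp add: norm_Pair real_sqrt_ge_abs1)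
    thus "c \<in> strip \<inter> cball 0 (1/2)" using c by (auto simp: strip_def)
  qed
  have Ss: "?S \<in> sets lborel" using strip_sets by simp
  have bS: "bounded ?S" by (rule bounded_subset[OF bounded_cball]) auto
  have Sf: "emeasure lborel ?S < \<infinity>" by (rule emeasure_bounded_finite[OF bS])
  have "measure lborel ?S \<le> measure lborel (cball (0::real\<times>real) (1/2) - ball 0 (1/2))"
  proof (intro measure_mono_fmeasurable Ss fmeasurableI)
    show "emeasure lborel (cball (0::real\<times>real) (1/2) - ball 0 (1/2)) < \<infinity>"
      by (rule emeasure_bounded_finite, rule bounded_subset[OF bounded_cball]) auto
  qed auto
  hence l0: "measure lborel ?S = 0" using lborel_shell by (simp add: measure_nonneg antisym)
  have "measure nu ?S \<le> 1 * measure lborel ?S"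
    by (rule nu_bounds(2)[OF Ss Sf, where a=0]) (auto simp: gd_def)
  moreover have "0 \<le> measure nu ?S" by simp
  ultimately have z: "measure nu ?S = 0" using l0 by simp
  have "emeasure nu (strip \<inter> cball 0 (1/2)) \<noteq> \<infinity>"
  proof -
    have "emeasure nu (strip \<inter> cball 0 (1/2)) \<le> emeasure nu strip"
      by (rule emeasure_mono) (use strip_sets in auto)
    thus ?thesis by (auto simp: nu_strip top_unique)
  qed
  hence "measure nu ?S = measure nu (strip \<inter> cball 0 (1/2)) - measure nu (ball 0 (1/2))"
    using sub strip_sets by (subst measure_Diff) auto
  thus ?thesis using z by simp
qed

lemma nu_strip_measure: "measure nu strip = 1 - erfc (sqrt pi / 2)"
proof -
  have "0 \<le> 1 - erfc (sqrt pi / 2)" unfolding fg_mid[symmetric]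
    by (rule Bochner_Integration.integral_nonneg) (simp add: fg_nonneg)
  thus ?thesis by (simp add: measure_def nu_strip)
qed

context ppp begin

lemma NE_R: "measure M (NE Racute) = measure nu Racute"
proof -
  interpret prob_space M by (rule ps)
  define Rm where "Rm = (\<lambda>m::nat. Racute \<inter> ball 0 (real m))"
  have Rms: "Rm m \<in> sets lborel" for m unfolding Rm_def using Racute_sets by simp
  have Rmb: "bounded (Rm m)" for m unfolding Rm_def by (rule bounded_subset[OF bounded_ball]) auto
  have inc: "incseq Rm" unfolding Rm_def incseq_def by auto
  have UR: "(\<Union>m. Rm m) = Racute"
  proof (intro equalityI subsetI)
    fix c assume "c \<in> Racute"
    moreover obtain m :: nat where "norm c < real m" using reals_Archimedean2 by blast
    ultimately show "c \<in> (\<Union>m. Rm m)" unfolding Rm_def by auto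
  qed (auto simp: Rm_def)
  have eq: "measure M (NE (Rm m)) = measure nu (Rm m)" for m by (rule NE_nu[OF Rms Rmb])
  have L1: "(\<lambda>m. measure M (NE (Rm m))) \<longlonglongrightarrow> measure M (NE Racute)"
  proof -
    have "(\<lambda>m. measure M (NE (Rm m))) \<longlonglongrightarrow> measure M (\<Union>m. NE (Rm m))"
    proof (rule finite_Lim_measure_incseq)
      show "range (\<lambda>m. NE (Rm m)) \<subseteq> sets M" using NE_sets Rms by auto
      show "incseq (\<lambda>m. NE (Rm m))" unfolding incseq_def
      proof (intro allI impI)
        fix m n :: nat assume "m \<le> n"
        hence "Rm m \<subseteq> Rm n" using inc by (simp add: incseq_def)
        thus "NE (Rm m) \<subseteq> NE (Rm n)" unfolding NE_def by blast
      qed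
    qed
    moreover have "(\<Union>m. NE (Rm m)) = NE Racute" using NE_UN[of Rm UNIV] UR by simp
    ultimately show ?thesis by simp
  qed
  have fR: "emeasure nu Racute \<noteq> \<infinity>"
  proof -
    have "emeasure nu Racute \<le> emeasure nu strip"
      by (rule emeasure_mono) (use strip_sets in \<open>auto simp: Racute_eq\<close>)
    thus ?thesis by (auto simp: nu_strip top_unique)
  qed
  have "(\<lambda>m. emeasure nu (Rm m)) \<longlonglongrightarrow> emeasure nu (\<Union>m. Rm m)"
    by (rule Lim_emeasure_incseq) (use Rms inc in auto)
  moreover have "emeasure nu (Rm m) = ennreal (measure nu (Rm m))" for m
    by (rule nu_bounds(3)[OF Rms emeasure_bounded_finite[OF Rmb], where a=0 and b=1]) (auto simp: gd_def)
  moreover have "emeasure nu Racute = ennreal (measure nu Racute)" using fR by (simp add: emeasure_eq_ennreal_measure)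
  ultimately have "(\<lambda>m. ennreal (measure nu (Rm m))) \<longlonglongrightarrow> ennreal (measure nu Racute)" using UR by simp
  hence L2: "(\<lambda>m. measure nu (Rm m)) \<longlonglongrightarrow> measure nu Racute"
    by (subst (asm) tendsto_ennreal_iff) auto
  show ?thesis using LIMSEQ_unique[OF L1] L2 eq by simp
qed

end

theorem mainTheorem16:
  fixes M :: "'w measure" and P :: "'w \<Rightarrow> (real \<times> real) set"
  assumes "homogeneous_PPP M P"
  shows "measure M {\<omega>\<in>space M. \<exists>C\<in>P \<omega>.
            (\<forall>p\<in>P \<omega>. p \<noteq> C \<longrightarrow> norm C < norm p) \<and>
            acute_triangle (-1/2, 0) (1/2, 0) C}
         = exp (- pi / 4) - erfc (sqrt pi / 2)"
proof -
  interpret ppp M P by (rule ppp.intro[OF assms])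
  have "{\<omega>\<in>space M. \<exists>C\<in>P \<omega>. (\<forall>p\<in>P \<omega>. p \<noteq> C \<longrightarrow> norm C < norm p) \<and> acute_triangle (-1/2, 0) (1/2, 0) C}
    = NE Racute" unfolding NE_def Racute_def by simp
  moreover have "measure M (NE Racute) = exp (- pi / 4) - erfc (sqrt pi / 2)"
  proof -
    have b: "measure nu (ball 0 (1/2)) = 1 - exp (- pi / 4)"
      using NE_nu[of "ball 0 (1/2)"] NE_ball[of "1/2"] by (simp add: power2_eq_square)
    show ?thesis using NE_R nu_R nu_cap b nu_strip_measure by simp
  qed
  ultimately show ?thesis by simp
qed

end
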